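(* Let $\{x_i\}_{i\in[N]}$ be the global solution of the delayed consensus system described in the context. Then for all $t\ge\tau$, \[ \max_{i\in[N]}|\dot x_i(t)|\le d_x(t-\tau)+\int_{t-\tau}^{t-\sigma}\max_{i\in[N]}|\dot x_i(s)|\,\mathrm ds. \]
   Context: Let $N\ge2$, $d\ge1$ be integers, $[N]=\{1,\dots,N\}$, $0\le\sigma\le\tau$. Let $\psi:[0,\infty)\to[0,\infty)$ be continuous, nonincreasing, positive everywhere, with $\sup\psi\le1$. Given $x_i^0\in C([-\tau,0],\mathbb{R}^d)$, $\{x_i\}$ is the global solution (continuous on $[-\tau,\infty)$, continuously differentiable on $[0,\infty)$, one-sided at $0$) of $\dot x_i(t)=\sum_{j\ne i}a_{ij}(t)(x_j(t-\tau)-x_i(t-\sigma))$ for $t>0$, with $a_{ij}(t)=\frac1{N-1}\psi(|x_i(t-\sigma)-x_j(t-\tau)|)$ and $x_i=x_i^0$ on $[-\tau,0]$. $d_x(t):=\max_{i,j\in[N]}|x_i(t)-x_j(t)|$. *)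

theory Defs
  imports "HOL-Analysis.Analysis"
begin

definition dx :: "nat \<Rightarrow> (nat \<Rightarrow> real \<Rightarrow> real^'d) \<Rightarrow> real \<Rightarrow> real" where
  "dx N x t = Max {norm (x i t - x j t) | i j. i \<in> {1..N} \<and> j \<in> {1..N}}"

end

theory Submission imports Defs begin
lemma setim: "{f i | i. i \<in> A} = f ` A" by auto

lemma cont_Max:
  fixes f :: "nat \<Rightarrow> real \<Rightarrow> real"
  shows "1 \<le> n \<Longrightarrow> (\<And>i. i \<in> {1..n} \<Longrightarrow> continuous_on S (f i)) \<Longrightarrow>
    continuous_on S (\<lambda>s. Max {f i s | i. i \<in> {1..n}})"
proof (induction n)
  case 0 then show ?case by simp
next
  case (Suc n)
  show ?case
  proof (cases "n = 0")
    case True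
    then show ?thesis using Suc.prems by (simp add: setim)
  next
    case False
    have e: "{1..Suc n} = insert (Suc n) {1..n}" by auto
    have eq: "(\<lambda>s. Max {f i s | i. i \<in> {1..Suc n}}) = (\<lambda>s. max (f (Suc n) s) (Max {f i s | i. i \<in> {1..n}}))"
      unfolding setim e using False by (simp add: image_insert)
    have c1: "continuous_on S (\<lambda>s. Max {f i s | i. i \<in> {1..n}})"
      using Suc False by auto
    have c2: "continuous_on S (f (Suc n))" using Suc.prems by auto
    show ?thesis unfolding eq by (rule continuous_on_max[OF c2 c1])
  qed
qed

theorem lemma3p1:
  fixes N :: nat and \<sigma> \<tau> :: real and \<psi> :: "real \<Rightarrow> real"
    and x x' :: "nat \<Rightarrow> real \<Rightarrow> real^'d"
  assumes N2: "N \<ge> 2"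
    and sig: "0 \<le> \<sigma>" "\<sigma> \<le> \<tau>"
    and psi_cont: "continuous_on {0..} \<psi>"
    and psi_mono: "\<And>a b. 0 \<le> a \<Longrightarrow> a \<le> b \<Longrightarrow> \<psi> b \<le> \<psi> a"
    and psi_pos: "\<And>r. 0 \<le> r \<Longrightarrow> 0 < \<psi> r"
    and psi_le1: "\<And>r. 0 \<le> r \<Longrightarrow> \<psi> r \<le> 1"
    and x_cont: "\<And>i. i \<in> {1..N} \<Longrightarrow> continuous_on {-\<tau>..} (x i)"
    and x_deriv: "\<And>i t. i \<in> {1..N} \<Longrightarrow> 0 \<le> t \<Longrightarrow>
                   (x i has_vector_derivative x' i t) (at t within {0..})"
    and x'_cont: "\<And>i. i \<in> {1..N} \<Longrightarrow> continuous_on {0..} (x' i)"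
    and ode: "\<And>i t. i \<in> {1..N} \<Longrightarrow> 0 < t \<Longrightarrow>
      x' i t = (\<Sum>j\<in>{1..N} - {i}.
         ((1 / (real N - 1)) * \<psi> (norm (x i (t - \<sigma>) - x j (t - \<tau>))))
           *\<^sub>R (x j (t - \<tau>) - x i (t - \<sigma>)))"
    and t: "\<tau> \<le> t"
  shows "Max {norm (x' i t) | i. i \<in> {1..N}}
          \<le> dx N x (t - \<tau>)
             + integral {t - \<tau>..t - \<sigma>} (\<lambda>s. Max {norm (x' i s) | i. i \<in> {1..N}})"
proof -
  define F where "F i s = (\<Sum>j\<in>{1..N} - {i}.
         ((1 / (real N - 1)) * \<psi> (norm (x i (s - \<sigma>) - x j (s - \<tau>))))
           *\<^sub>R (x j (s - \<tau>) - x i (s - \<sigma>)))" for i s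
  have cx: "continuous_on {0..} (\<lambda>s. x j (s - c))" if "j \<in> {1..N}" "0 \<le> c" "c \<le> \<tau>" for j c
    by (rule continuous_on_compose2[OF x_cont[OF that(1)]]) (use that in \<open>auto intro!: continuous_intros\<close>)
  have cpsi: "continuous_on {0..} (\<lambda>s. \<psi> (norm (x i (s - \<sigma>) - x j (s - \<tau>))))"
    if "i \<in> {1..N}" "j \<in> {1..N}" for i j
    by (rule continuous_on_compose2[OF psi_cont])
       (use that sig in \<open>auto intro!: continuous_intros cx\<close>)
  have cF: "continuous_on {0..} (F i)" if "i \<in> {1..N}" for i
    unfolding F_def using that sig
    by (auto intro!: continuous_intros cx cpsi)
  have ode0: "x' i s = F i s" if i: "i \<in> {1..N}" and s: "0 \<le> s" for i s
  proof (cases "s = 0")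
    case False
    then show ?thesis using ode[OF i] s F_def by auto
  next
    case True
    have l1: "(x' i \<longlongrightarrow> x' i 0) (at_right 0)"
      using x'_cont[OF i] unfolding continuous_on_def
      by (auto intro: tendsto_within_subset)
    have l2: "(F i \<longlongrightarrow> F i 0) (at_right 0)"
      using cF[OF i] unfolding continuous_on_def
      by (auto intro: tendsto_within_subset)
    have ev: "eventually (\<lambda>y. F i y = x' i y) (at_right (0::real))"
      unfolding eventually_at_right_field using ode[OF i] F_def
      by (intro exI[of _ 1]) auto
    have l3: "(x' i \<longlongrightarrow> F i 0) (at_right 0)"
      using tendsto_cong[OF ev] l2 by simp
    show ?thesis using tendsto_unique[OF trivial_limit_at_right_real l1 l3] True by simp
  qed
  define M where "M s = Max {norm (x' i s) | i. i \<in> {1..N}}" for s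
  define D where "D = dx N x (t - \<tau>)"
  define I where "I = integral {t - \<tau>..t - \<sigma>} M"
  have N1: "1 \<le> N" using N2 by simp
  have cM: "continuous_on {0..} M"
    unfolding M_def
    by (rule cont_Max[OF N1]) (auto intro!: continuous_intros x'_cont)
  have Mge: "norm (x' i s) \<le> M s" if "i \<in> {1..N}" for i s
    unfolding M_def by (rule Max_ge) (use that in \<open>auto simp: setim\<close>)
  have sub: "{t - \<tau>..t - \<sigma>} \<subseteq> {0..}" using t by auto
  have inc: "norm (x i (t - \<sigma>) - x i (t - \<tau>)) \<le> I" if i: "i \<in> {1..N}" for i
  proof -
    have "(x' i has_integral x i (t - \<sigma>) - x i (t - \<tau>)) {t - \<tau>..t - \<sigma>}"
      by (rule fundamental_theorem_of_calculus)
         (use sig t in \<open>auto intro: has_vector_derivative_within_subset[OF x_deriv[OF i]]\<close>)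
    then have "x i (t - \<sigma>) - x i (t - \<tau>) = integral {t - \<tau>..t - \<sigma>} (x' i)"
      by (simp add: integral_unique)
    also have "norm \<dots> \<le> I"
      unfolding I_def
      by (rule integral_norm_bound_integral)
         (auto intro!: integrable_continuous_interval continuous_on_subset[OF cM sub]
           continuous_on_subset[OF x'_cont[OF i] sub] Mge i)
    finally show ?thesis .
  qed
  have fin: "finite {norm (x i (t - \<tau>) - x j (t - \<tau>)) | i j. i \<in> {1..N} \<and> j \<in> {1..N}}"
  proof -
    have "{norm (x i (t - \<tau>) - x j (t - \<tau>)) | i j. i \<in> {1..N} \<and> j \<in> {1..N}}
      = (\<lambda>(i, j). norm (x i (t - \<tau>) - x j (t - \<tau>))) ` ({1..N} \<times> {1..N})" by fastforce
    then show ?thesis by simp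
  qed
  have dd: "norm (x j (t - \<tau>) - x i (t - \<tau>)) \<le> D" if "i \<in> {1..N}" "j \<in> {1..N}" for i j
    unfolding D_def dx_def by (rule Max_ge[OF fin]) (use that in auto)
  have each: "norm (x' i t) \<le> D + I" if i: "i \<in> {1..N}" for i
  proof -
    define c where "c = 1 / (real N - 1)"
    have c0: "0 \<le> c" using N2 c_def by simp
    have trm: "norm (((1 / (real N - 1)) * \<psi> (norm (x i (t - \<sigma>) - x j (t - \<tau>))))
           *\<^sub>R (x j (t - \<tau>) - x i (t - \<sigma>))) \<le> c * (D + I)" if j: "j \<in> {1..N} - {i}" for j
    proof -
      let ?p = "\<psi> (norm (x i (t - \<sigma>) - x j (t - \<tau>)))"
      have p0: "0 < ?p" and p1: "?p \<le> 1" using psi_pos psi_le1 by auto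
      have "x j (t - \<tau>) - x i (t - \<sigma>) = (x j (t - \<tau>) - x i (t - \<tau>)) - (x i (t - \<sigma>) - x i (t - \<tau>))"
        by simp
      then have nv: "norm (x j (t - \<tau>) - x i (t - \<sigma>)) \<le> D + I"
        using norm_triangle_ineq4[of "x j (t - \<tau>) - x i (t - \<tau>)" "x i (t - \<sigma>) - x i (t - \<tau>)"]
          dd[OF i, of j] inc[OF i] j by auto
      have "norm ((c * ?p) *\<^sub>R (x j (t - \<tau>) - x i (t - \<sigma>))) = c * ?p * norm (x j (t - \<tau>) - x i (t - \<sigma>))"
        using c0 p0 by simp
      also have "\<dots> \<le> c * 1 * norm (x j (t - \<tau>) - x i (t - \<sigma>))"
        by (intro mult_right_mono mult_left_mono p1 c0) auto
      also have "\<dots> \<le> c * (D + I)" using nv c0 by (simp add: mult_left_mono)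
      finally show ?thesis unfolding c_def .
    qed
    have "norm (x' i t) = norm (F i t)" using ode0[OF i] sig t by simp
    also have "\<dots> \<le> (\<Sum>j\<in>{1..N} - {i}. c * (D + I))"
      unfolding F_def by (rule order_trans[OF norm_sum sum_mono]) (rule trm)
    also have "\<dots> = real (N - 1) * (c * (D + I))"
      using i by (simp add: card_Diff_singleton)
    also have "\<dots> = D + I" using N2 by (simp add: c_def of_nat_diff)
    finally show ?thesis .
  qed
  have "M t \<le> D + I"
    unfolding M_def by (rule Max.boundedI) (use each N1 in \<open>auto simp: setim\<close>)
  then show ?thesis unfolding M_def D_def I_def by simp
qed

end
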